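(* Let $0<\varepsilon<1/4$ and $r=(10/\varepsilon^2)\log(1/\varepsilon)$. Let $G$ be a bipartite graph with at least one edge, and let $H$ be a balanced bipartite subgraph of $G$ with parts $A,B$, $|A|=|B|=m$, that maximizes $\Phi(F)=d_F^{\,r}\,v(F)$ over all balanced bipartite subgraphs $F$ of $G$. Assume $\varepsilon m$ is a positive integer. Then for all $A_1\subseteq A$, $B_1\subseteq B$ with $|A_1|=|B_1|=\varepsilon m$ we have $$d(A_1,B_1)\le d_H\,(1+\varepsilon^2/5).$$
   Context: $\log$ is the natural logarithm; $v(F)$ is the number of vertices of $F$. A bipartite graph is balanced if its two parts have equal size. For disjoint vertex sets $X,Y$, $d(X,Y)=e(X,Y)/(|X|\,|Y|)$ (number of edges between $X$ and $Y$ divided by $|X||Y|$); the density $d_F$ of a bipartite graph $F$ is this quantity for its two parts. *)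

theory Defs
  imports Complex_Main
begin

definition simple_graph :: "'a set \<Rightarrow> ('a \<Rightarrow> 'a \<Rightarrow> bool) \<Rightarrow> bool" where
  "simple_graph V E \<longleftrightarrow> finite V \<and> (\<forall>x y. E x y \<longrightarrow> x \<in> V \<and> y \<in> V \<and> x \<noteq> y \<and> E y x)"

definition bipartite_graph :: "'a set \<Rightarrow> ('a \<Rightarrow> 'a \<Rightarrow> bool) \<Rightarrow> bool" where
  "bipartite_graph V E \<longleftrightarrow> simple_graph V E \<and>
     (\<exists>X Y. X \<inter> Y = {} \<and> X \<union> Y = V \<and>
        (\<forall>x y. E x y \<longrightarrow> (x \<in> X \<and> y \<in> Y) \<or> (x \<in> Y \<and> y \<in> X)))"

definition bip_density :: "('a \<Rightarrow> 'a \<Rightarrow> bool) \<Rightarrow> 'a set \<Rightarrow> 'a set \<Rightarrow> real" where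
  "bip_density E X Y = real (card {(x, y). x \<in> X \<and> y \<in> Y \<and> E x y}) / (real (card X) * real (card Y))"

definition balanced_bip_subgraph ::
  "'a set \<Rightarrow> ('a \<Rightarrow> 'a \<Rightarrow> bool) \<Rightarrow> 'a set \<Rightarrow> 'a set \<Rightarrow> ('a \<Rightarrow> 'a \<Rightarrow> bool) \<Rightarrow> bool" where
  "balanced_bip_subgraph V E X Y F \<longleftrightarrow>
     X \<subseteq> V \<and> Y \<subseteq> V \<and> X \<inter> Y = {} \<and> card X = card Y \<and>
     simple_graph (X \<union> Y) F \<and> (\<forall>x y. F x y \<longrightarrow> E x y) \<and>
     (\<forall>x y. F x y \<longrightarrow> (x \<in> X \<and> y \<in> Y) \<or> (x \<in> Y \<and> y \<in> X))"

definition Phi :: "real \<Rightarrow> 'a set \<Rightarrow> 'a set \<Rightarrow> ('a \<Rightarrow> 'a \<Rightarrow> bool) \<Rightarrow> real" where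
  "Phi r X Y F = bip_density F X Y powr r * real (card (X \<union> Y))"

end

theory Submission
  imports Defs
begin

theorem lemma3p3:
  fixes V :: "'a set" and E H :: "'a \<Rightarrow> 'a \<Rightarrow> bool" and A B :: "'a set"
    and \<epsilon> r :: real and m k :: nat
  assumes "0 < \<epsilon>" and "\<epsilon> < 1/4"
    and "r = (10 / \<epsilon>\<^sup>2) * ln (1 / \<epsilon>)"
    and "bipartite_graph V E" and "\<exists>x y. E x y"
    and "balanced_bip_subgraph V E A B H"
    and "card A = m" and "card B = m"
    and "\<forall>X Y F. balanced_bip_subgraph V E X Y F \<longrightarrow> Phi r X Y F \<le> Phi r A B H"
    and "\<epsilon> * real m = real k" and "k > 0"
  shows "\<forall>A1 B1. A1 \<subseteq> A \<longrightarrow> B1 \<subseteq> B \<longrightarrow> card A1 = k \<longrightarrow> card B1 = k \<longrightarrow>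
           bip_density H A1 B1 \<le> bip_density H A B * (1 + \<epsilon>\<^sup>2 / 5)"
proof (intro allI impI)
  fix A1 B1 assume A1: "A1 \<subseteq> A" and B1: "B1 \<subseteq> B" and cA1: "card A1 = k" and cB1: "card B1 = k"
  have sub: "A \<subseteq> V" "B \<subseteq> V" "A \<inter> B = {}" "simple_graph (A \<union> B) H"
    "\<forall>x y. H x y \<longrightarrow> E x y" "\<forall>x y. H x y \<longrightarrow> (x \<in> A \<and> y \<in> B) \<or> (x \<in> B \<and> y \<in> A)"
    using assms(6) unfolding balanced_bip_subgraph_def by auto
  have finAB: "finite A" "finite B" using sub(4) unfolding simple_graph_def by auto
  have mpos: "m > 0" using assms(7) assms(11) cA1 A1 finAB card_mono by (metis gr0I le_zero_eq)
  define F where "F = (\<lambda>x y. H x y \<and> x \<in> A1 \<union> B1 \<and> y \<in> A1 \<union> B1)"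
  have disj: "A1 \<inter> B1 = {}" using sub(3) A1 B1 by auto
  have bF: "balanced_bip_subgraph V E A1 B1 F"
    unfolding balanced_bip_subgraph_def
  proof (intro conjI)
    show "A1 \<subseteq> V" "B1 \<subseteq> V" using A1 B1 sub by auto
    show "A1 \<inter> B1 = {}" by fact
    show "card A1 = card B1" using cA1 cB1 by simp
    show "simple_graph (A1 \<union> B1) F" unfolding simple_graph_def F_def
      using sub(4) finAB A1 B1 finite_subset unfolding simple_graph_def
      by (metis finite_Un)
    show "\<forall>x y. F x y \<longrightarrow> E x y" using sub(5) F_def by auto
    show "\<forall>x y. F x y \<longrightarrow> x \<in> A1 \<and> y \<in> B1 \<or> x \<in> B1 \<and> y \<in> A1"
      using sub(6) F_def A1 B1 disj sub(3) by blast
  qed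
  have dF: "bip_density F A1 B1 = bip_density H A1 B1"
    unfolding bip_density_def F_def
    by (rule arg_cong2[where f="(/)"], rule arg_cong[where f="\<lambda>x. real (card x)"]) auto
  define d1 where "d1 = bip_density H A1 B1"
  define d where "d = bip_density H A B"
  have d0: "d \<ge> 0" unfolding d_def bip_density_def by simp
  have fin1: "finite A1" "finite B1" using finAB A1 B1 finite_subset by auto
  have cU1: "card (A1 \<union> B1) = 2 * k"
    using card_Un_disjoint[OF fin1 disj] cA1 cB1 by simp
  have cU: "card (A \<union> B) = 2 * m"
    using card_Un_disjoint[of A B] sub(3) assms(7,8) finAB by auto
  have ineq: "d1 powr r * (2 * real k) \<le> d powr r * (2 * real m)"
    using assms(9) bF dF cU1 cU unfolding Phi_def d1_def d_def by force
  have lnpos: "ln (1/\<epsilon>) > 0" using assms(1,2) by simp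
  have rpos: "r > 0" using assms(1,3) lnpos by simp
  show "d1 \<le> d * (1 + \<epsilon>\<^sup>2 / 5)" unfolding d1_def[symmetric] d_def[symmetric]
  proof (cases "d1 = 0")
    case True then show ?thesis using d0 by simp
  next
    case False
    then have d1p: "d1 > 0" unfolding d1_def bip_density_def by simp
    have kpos: "real k > 0" using assms(11) by simp
    have dp: "d > 0"
    proof (rule ccontr)
      assume "\<not> d > 0" then have "d = 0" using d0 by simp
      moreover have "d1 powr r > 0" using d1p by simp
      moreover have "d1 powr r * (2 * real k) > 0" using \<open>d1 powr r > 0\<close> kpos by simp
      ultimately show False using ineq by simp
    qed
    have "ln (d1 powr r * (2 * real k)) \<le> ln (d powr r * (2 * real m))"
      using ineq d1p kpos dp mpos by (subst ln_le_cancel_iff) auto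
    then have "r * ln d1 + ln (2 * real k) \<le> r * ln d + ln (2 * real m)"
      using d1p dp kpos mpos by (simp add: ln_mult ln_powr)
    moreover have "ln (2 * real m) - ln (2 * real k) = ln (1/\<epsilon>)"
    proof -
      have "ln (2 * real m) - ln (2 * real k) = ln (real m / real k)"
        using kpos mpos by (simp add: ln_div ln_mult)
      also have "real m / real k = 1/\<epsilon>" using assms(1,10) mpos kpos
        by (simp add: field_simps)
      finally show ?thesis .
    qed
    ultimately have "r * (ln d1 - ln d) \<le> ln (1/\<epsilon>)" by (simp add: algebra_simps)
    also have "ln (1/\<epsilon>) = r * (\<epsilon>\<^sup>2/10)" using assms(1,3) by simp
    finally have "ln d1 - ln d \<le> \<epsilon>\<^sup>2/10" using rpos by simp
    then have "ln d1 \<le> ln d + \<epsilon>\<^sup>2/10" by simp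
    then have "exp (ln d1) \<le> exp (ln d + \<epsilon>\<^sup>2/10)" by simp
    then have "d1 \<le> d * exp (\<epsilon>\<^sup>2/10)" using d1p dp by (simp add: exp_add)
    also have "exp (\<epsilon>\<^sup>2/10) \<le> 1 + 2 * (\<epsilon>\<^sup>2/10)"
    proof (rule real_exp_bound_lemma)
      show "0 \<le> \<epsilon>\<^sup>2/10" by simp
      have "\<epsilon>\<^sup>2 \<le> 1" using assms(1,2) by (simp add: power_le_one)
      then show "\<epsilon>\<^sup>2/10 \<le> 1/2" by simp
    qed
    then have "d * exp (\<epsilon>\<^sup>2/10) \<le> d * (1 + \<epsilon>\<^sup>2/5)" using dp by simp
    finally show ?thesis .
  qed
qed

end
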